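(* Let $\Sigma=(\mathbf{x},\mathbf{F})$ be an LP seed of rank $n\ge2$ satisfying Condition 1.2. Then, as $R$-modules, $$R[x_2,x'_2,\dots,x_n,x'_n]=\ker(\varphi)\oplus R^{st}[x_2,x'_2,\dots,x_n,x'_n],$$ and the restriction of $\varphi$ to $R^{st}[x_2,x'_2,\dots,x_n,x'_n]$ is injective.
   Context: $R$ is a unique factorization domain containing $\mathbb{Z}$ and $\mathcal{F}$ is the field of rational functions in $n$ variables over $\mathrm{Frac}(R)$. An LP seed of rank $n$ is a pair $(\mathbf{x},\mathbf{F})$ where $\mathbf{x}=\{x_1,\dots,x_n\}$ is a transcendence basis of $\mathcal{F}$ over $\mathrm{Frac}(R)$ and $\mathbf{F}=\{F_1,\dots,F_n\}$ are irreducible polynomials in $R[x_1,\dots,x_n]$ with $x_j\nmid F_i$ for all $i,j$ and $F_i$ not involving $x_i$. The exchange Laurent polynomial is $\hat F_j=F_j/\prod_{k\neq j}x_k^{a_k}$, with $a_k\in\mathbb{Z}_{\ge0}$ maximal such that $F_k^{a_k}$ divides $F_j|_{x_k\leftarrow F_k/x'_k}$ in $R[x_1,\dots,x_{k-1},(x'_k)^{-1},x_{k+1},\dots,x_n]$. Set $x'_j=\hat F_j/x_j$. Lexicographic order on $\mathbb{Z}^n$: $\mathbf{a}\prec\mathbf{a}'$ if the first nonzero entry of $\mathbf{a}'-\mathbf{a}$ is positive; the lexicographically first monomial of a polynomial is its term with $\prec$-smallest exponent vector. Condition 1.2: for every $k\in[1,n]$, with $M_k$ the lexicographically first monomial of $F_k$: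 (i) $\hat F_k=F_k$; (ii) $M_k=\mathbf{x}^{\mathbf{v}_k}=x_{k+1}^{v_{k+1,k}}\cdots x_n^{v_{n,k}}$ (coefficient $1$) with $\mathbf{v}_k\in\mathbb{Z}_{\ge0}^{n-k}$ for $k\in[1,n-1]$, and $M_n=1$; (iii) if $k\ne1$ and $F_k$ involves $x_1$, then every monomial of $F_k-M_k$ is divisible by $x_1$; (iv) if $k\notin\{1,2\}$, $F_k$ does not involve $x_1$, and there is $i\in[2,k-1]$ such that $x_k$ divides $M_i$, then every monomial of $F_k-M_k$ is divisible by $x_i$. Under (i), $x'_j=F_j/x_j\in R[x_1,x_2^{\pm1},\dots,x_n^{\pm1}]$ for $j\ge2$, so $R[x_2,x'_2,\dots,x_n,x'_n]\subseteq R[x_1,x_2^{\pm1},\dots,x_n^{\pm1}]$; $\varphi:R[x_2,x'_2,\dots,x_n,x'_n]\to R[x_2^{\pm1},\dots,x_n^{\pm1}]$ is the restriction of the $R$-algebra homomorphism $R[x_1,x_2^{\pm1},\dots,x_n^{\pm1}]\to R[x_2^{\pm1},\dots,x_n^{\pm1}]$ sending $x_1\mapsto0$ and $x_i^{\pm1}\mapsto x_i^{\pm1}$ ($i\ge2$). A standard monomial in $x_2,x'_2,\dots,x_n,x'_n$ is a monomial in these containing no product $x_ix'_i$; $R^{st}[x_2,x'_2,\dots,x_n,x'_n]$ denotes their $R$-linear span. *)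

theory Defs
  imports "HOL-Computational_Algebra.Factorial_Ring" "HOL-Library.Poly_Mapping"
begin

text \<open>Laurent polynomials over R in the variables x_1, ..., x_n (variables indexed by
  natural numbers 1..n): a monomial is a finitely supported exponent vector
  nat =>0 int, a Laurent polynomial a finitely supported coefficient function.
  The field of rational functions contains all rings appearing in the statement;
  the transcendence basis x is identified with the variables themselves.\<close>

type_synonym 'a lpoly = "(nat \<Rightarrow>\<^sub>0 int) \<Rightarrow>\<^sub>0 'a"

definition lconst :: "'a::comm_ring_1 \<Rightarrow> 'a lpoly" where
  "lconst r = Poly_Mapping.single 0 r"

definition Xv :: "nat \<Rightarrow> 'a::comm_ring_1 lpoly" where
  "Xv i = Poly_Mapping.single (Poly_Mapping.single i 1) 1"

definition Xinv :: "nat \<Rightarrow> 'a::comm_ring_1 lpoly" where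
  "Xinv i = Poly_Mapping.single (Poly_Mapping.single i (-1)) 1"

definition lmonom :: "(nat \<Rightarrow>\<^sub>0 int) \<Rightarrow> 'a::comm_ring_1 \<Rightarrow> 'a lpoly" where
  "lmonom e c = Poly_Mapping.single e c"

definition is_poly :: "nat \<Rightarrow> 'a::comm_ring_1 lpoly \<Rightarrow> bool" where
  "is_poly n p \<longleftrightarrow> (\<forall>m \<in> Poly_Mapping.keys p. \<forall>i. Poly_Mapping.lookup m i \<noteq> 0 \<longrightarrow> i \<in> {1..n} \<and> Poly_Mapping.lookup m i > 0)"

definition units_in :: "('a::comm_ring_1 lpoly \<Rightarrow> bool) \<Rightarrow> 'a lpoly \<Rightarrow> bool" where
  "units_in S u \<longleftrightarrow> S u \<and> (\<exists>v. S v \<and> u * v = 1)"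

definition dvd_in :: "('a::comm_ring_1 lpoly \<Rightarrow> bool) \<Rightarrow> 'a lpoly \<Rightarrow> 'a lpoly \<Rightarrow> bool" where
  "dvd_in S a b \<longleftrightarrow> (\<exists>c. S c \<and> b = a * c)"

definition irreducible_poly :: "nat \<Rightarrow> 'a::comm_ring_1 lpoly \<Rightarrow> bool" where
  "irreducible_poly n p \<longleftrightarrow> is_poly n p \<and> p \<noteq> 0 \<and> \<not> units_in (is_poly n) p \<and>
     (\<forall>g h. is_poly n g \<longrightarrow> is_poly n h \<longrightarrow> p = g * h \<longrightarrow>
        units_in (is_poly n) g \<or> units_in (is_poly n) h)"

definition involves :: "'a::comm_ring_1 lpoly \<Rightarrow> nat \<Rightarrow> bool" where
  "involves p i \<longleftrightarrow> (\<exists>m \<in> Poly_Mapping.keys p. Poly_Mapping.lookup m i \<noteq> 0)"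

text \<open>The ring R[x_1,...,x_{k-1},(x'_k)^{-1},x_{k+1},...,x_n]; the new variable x'_k
  occupies the slot of the variable index k.\<close>
definition ring_k :: "nat \<Rightarrow> nat \<Rightarrow> 'a::comm_ring_1 lpoly \<Rightarrow> bool" where
  "ring_k n k p \<longleftrightarrow> (\<forall>m \<in> Poly_Mapping.keys p. (\<forall>i. Poly_Mapping.lookup m i \<noteq> 0 \<longrightarrow> i \<in> {1..n}) \<and>
      (\<forall>i. i \<noteq> k \<longrightarrow> Poly_Mapping.lookup m i \<ge> 0) \<and> Poly_Mapping.lookup m k \<le> 0)"

text \<open>p|_{x_k <- G / x'_k}, for p a polynomial and G not involving x_k; x'_k is
  again represented by the variable of index k.\<close>
definition subst_k :: "nat \<Rightarrow> 'a::comm_ring_1 lpoly \<Rightarrow> 'a lpoly \<Rightarrow> 'a lpoly" where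
  "subst_k k G p = (\<Sum>m \<in> Poly_Mapping.keys p.
      lmonom (m - Poly_Mapping.single k (Poly_Mapping.lookup m k)) (Poly_Mapping.lookup p m) *
      G ^ nat (Poly_Mapping.lookup m k) * Xinv k ^ nat (Poly_Mapping.lookup m k))"

definition exch_exp :: "nat \<Rightarrow> (nat \<Rightarrow> 'a::comm_ring_1 lpoly) \<Rightarrow> nat \<Rightarrow> nat \<Rightarrow> nat" where
  "exch_exp n F j k = (GREATEST a. dvd_in (ring_k n k) (F k ^ a) (subst_k k (F k) (F j)))"

definition hatF :: "nat \<Rightarrow> (nat \<Rightarrow> 'a::comm_ring_1 lpoly) \<Rightarrow> nat \<Rightarrow> 'a lpoly" where
  "hatF n F j = F j * (\<Prod>k \<in> {1..n} - {j}. Xinv k ^ exch_exp n F j k)"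

definition xprime :: "nat \<Rightarrow> (nat \<Rightarrow> 'a::comm_ring_1 lpoly) \<Rightarrow> nat \<Rightarrow> 'a lpoly" where
  "xprime n F j = hatF n F j * Xinv j"

definition LP_seed :: "nat \<Rightarrow> (nat \<Rightarrow> 'a::comm_ring_1 lpoly) \<Rightarrow> bool" where
  "LP_seed n F \<longleftrightarrow> (\<forall>i \<in> {1..n}. irreducible_poly n (F i) \<and> \<not> involves (F i) i \<and>
        (\<forall>j \<in> {1..n}. \<not> dvd_in (is_poly n) (Xv j) (F i)))"

definition lex_less :: "nat \<Rightarrow> (nat \<Rightarrow>\<^sub>0 int) \<Rightarrow> (nat \<Rightarrow>\<^sub>0 int) \<Rightarrow> bool" where
  "lex_less n a b \<longleftrightarrow> (\<exists>i \<in> {1..n}. (\<forall>j \<in> {1..<i}. Poly_Mapping.lookup a j = Poly_Mapping.lookup b j) \<and> Poly_Mapping.lookup a i < Poly_Mapping.lookup b i)"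

definition lexfirst_exp :: "nat \<Rightarrow> 'a::comm_ring_1 lpoly \<Rightarrow> nat \<Rightarrow>\<^sub>0 int" where
  "lexfirst_exp n p = (THE e. e \<in> Poly_Mapping.keys p \<and> (\<forall>e' \<in> Poly_Mapping.keys p. e' \<noteq> e \<longrightarrow> lex_less n e e'))"

definition lexfirst :: "nat \<Rightarrow> 'a::comm_ring_1 lpoly \<Rightarrow> 'a lpoly" where
  "lexfirst n p = lmonom (lexfirst_exp n p) (Poly_Mapping.lookup p (lexfirst_exp n p))"

definition divisible_by_var :: "nat \<Rightarrow> (nat \<Rightarrow>\<^sub>0 int) \<Rightarrow> bool" where
  "divisible_by_var i m \<longleftrightarrow> Poly_Mapping.lookup m i > 0"

definition condition_1_2 :: "nat \<Rightarrow> (nat \<Rightarrow> 'a::comm_ring_1 lpoly) \<Rightarrow> bool" where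
  "condition_1_2 n F \<longleftrightarrow> (\<forall>k \<in> {1..n}.
     hatF n F k = F k \<and>
     (k < n \<longrightarrow> Poly_Mapping.lookup (F k) (lexfirst_exp n (F k)) = 1 \<and>
        (\<forall>i. Poly_Mapping.lookup (lexfirst_exp n (F k)) i \<noteq> 0 \<longrightarrow> k < i \<and> i \<le> n \<and> Poly_Mapping.lookup (lexfirst_exp n (F k)) i > 0)) \<and>
     (k = n \<longrightarrow> lexfirst n (F k) = 1) \<and>
     (k \<noteq> 1 \<and> involves (F k) 1 \<longrightarrow>
        (\<forall>m \<in> Poly_Mapping.keys (F k - lexfirst n (F k)). divisible_by_var 1 m)) \<and>
     (k \<notin> {1, 2} \<and> \<not> involves (F k) 1 \<longrightarrow>
        (\<forall>i \<in> {2..k-1}. divisible_by_var k (lexfirst_exp n (F i)) \<longrightarrow>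
           (\<forall>m \<in> Poly_Mapping.keys (F k - lexfirst n (F k)). divisible_by_var i m))))"

inductive_set rspan :: "'a::comm_ring_1 lpoly set \<Rightarrow> 'a lpoly set" for S where
  zero: "0 \<in> rspan S"
| add: "s \<in> S \<Longrightarrow> p \<in> rspan S \<Longrightarrow> lconst r * s + p \<in> rspan S"

definition xmono :: "nat \<Rightarrow> (nat \<Rightarrow> 'a::comm_ring_1 lpoly) \<Rightarrow> (nat \<Rightarrow> nat) \<Rightarrow> (nat \<Rightarrow> nat) \<Rightarrow> 'a lpoly" where
  "xmono n F a b = (\<Prod>i \<in> {2..n}. Xv i ^ a i * xprime n F i ^ b i)"

text \<open>R[x_2,x'_2,...,x_n,x'_n]: the R-span of all monomials in these elements\<close>
definition alg_A :: "nat \<Rightarrow> (nat \<Rightarrow> 'a::comm_ring_1 lpoly) \<Rightarrow> 'a lpoly set" where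
  "alg_A n F = rspan {xmono n F a b | a b. True}"

text \<open>R^st[x_2,x'_2,...,x_n,x'_n]: the R-span of standard monomials (no x_i x'_i)\<close>
definition alg_st :: "nat \<Rightarrow> (nat \<Rightarrow> 'a::comm_ring_1 lpoly) \<Rightarrow> 'a lpoly set" where
  "alg_st n F = rspan {xmono n F a b | a b. \<forall>i \<in> {2..n}. a i = 0 \<or> b i = 0}"

text \<open>phi: x_1 -> 0, x_i^{+-1} -> x_i^{+-1} (i >= 2), on elements with nonnegative x_1-degree\<close>
definition phi :: "'a::comm_ring_1 lpoly \<Rightarrow> 'a lpoly" where
  "phi p = (\<Sum>m \<in> Poly_Mapping.keys p. if Poly_Mapping.lookup m 1 = 0 then lmonom m (Poly_Mapping.lookup p m) else 0)"

end

theory Submission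
  imports Defs "HOL-Library.Fun_Lexorder"
begin


lemma lookup_lconst_mult: "Poly_Mapping.lookup (lconst c * p) m = c * Poly_Mapping.lookup p m"
proof -
  have "lconst c * p = Poly_Mapping.map ((*) c) p"
    by (simp add: lconst_def mult_map_scale_conv_mult)
  then show ?thesis by (simp add: map.rep_eq when_def)
qed

lemma lconst_mult_lconst: "lconst a * lconst b = lconst (a * b)"
  by (simp add: lconst_def mult_single)

lemma lconst_one: "lconst 1 = 1" by (simp add: lconst_def)

lemma lconst_minus_one: "lconst (-1) * (p::'a::comm_ring_1 lpoly) = - p"
  by (rule poly_mapping_eqI) (simp add: lookup_lconst_mult)

lemma lookup_phi: "Poly_Mapping.lookup (phi p) m =
   (if Poly_Mapping.lookup m 1 = 0 then Poly_Mapping.lookup p m else 0)"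
proof -
  have "Poly_Mapping.lookup (phi p) m = (\<Sum>m'\<in>Poly_Mapping.keys p.
     (if Poly_Mapping.lookup m' 1 = 0 then Poly_Mapping.lookup p m' else 0) when m' = m)"
    unfolding phi_def lookup_sum
    by (rule sum.cong) (auto simp: lmonom_def lookup_single when_def)
  also have "\<dots> = (if Poly_Mapping.lookup m 1 = 0 then Poly_Mapping.lookup p m else 0)"
    by (cases "m \<in> Poly_Mapping.keys p") (auto simp: when_def in_keys_iff)
  finally show ?thesis .
qed

lemma phi_add: "phi (p + q) = phi p + phi q"
  by (rule poly_mapping_eqI) (simp add: lookup_phi lookup_add)

lemma phi_zero: "phi 0 = 0"
  by (rule poly_mapping_eqI) (simp add: lookup_phi)

lemma phi_minus: "phi (- p) = - phi (p::'a::comm_ring_1 lpoly)"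
  by (rule poly_mapping_eqI) (simp add: lookup_phi)

lemma phi_diff: "phi (p - q) = phi p - phi (q::'a::comm_ring_1 lpoly)"
  by (rule poly_mapping_eqI) (simp add: lookup_phi lookup_minus)

lemma phi_lconst: "phi (lconst c * p) = lconst c * phi p"
  by (rule poly_mapping_eqI) (simp add: lookup_phi lookup_lconst_mult)

lemma phi_id: "(\<forall>m\<in>Poly_Mapping.keys p. Poly_Mapping.lookup m 1 = 0) \<Longrightarrow> phi p = p"
  by (rule poly_mapping_eqI) (auto simp: lookup_phi in_keys_iff)

lemma phi_kill: "(\<forall>m\<in>Poly_Mapping.keys p. Poly_Mapping.lookup m 1 \<noteq> 0) \<Longrightarrow> phi p = 0"
  by (rule poly_mapping_eqI) (auto simp: lookup_phi in_keys_iff)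

lemma keys_phi: "m \<in> Poly_Mapping.keys (phi p) \<Longrightarrow> m \<in> Poly_Mapping.keys p \<and> Poly_Mapping.lookup m 1 = 0"
  by (auto simp: in_keys_iff lookup_phi split: if_splits)

lemma phi_phi: "phi (phi p) = phi p"
  by (rule phi_id) (auto dest: keys_phi)

definition nn1 :: "'a::comm_ring_1 lpoly \<Rightarrow> bool" where
  "nn1 p \<longleftrightarrow> (\<forall>m\<in>Poly_Mapping.keys p. Poly_Mapping.lookup m 1 \<ge> 0)"

lemma keys_mult_pos:
  assumes "\<And>m. m \<in> Poly_Mapping.keys p \<Longrightarrow> P (Poly_Mapping.lookup m 1)"
      and "\<And>m. m \<in> Poly_Mapping.keys q \<Longrightarrow> Q (Poly_Mapping.lookup m 1)"
      and "m \<in> Poly_Mapping.keys (p * q)"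
  shows "\<exists>u v. P u \<and> Q v \<and> Poly_Mapping.lookup m 1 = u + v"
  using keys_mult[of p q] assms by (force simp: lookup_add)

lemma phi_mult:
  fixes p q :: "'a::comm_ring_1 lpoly"
  assumes "nn1 p" "nn1 q"
  shows "phi (p * q) = phi p * phi q"
proof -
  define p1 where "p1 = p - phi p"
  define q1 where "q1 = q - phi q"
  have kp1: "Poly_Mapping.lookup m 1 > 0" if "m \<in> Poly_Mapping.keys p1" for m
  proof -
    have "Poly_Mapping.lookup m 1 \<noteq> 0" "m \<in> Poly_Mapping.keys p"
      using that unfolding p1_def by (auto simp: in_keys_iff lookup_minus lookup_phi split: if_splits)
    then show ?thesis using assms(1) unfolding nn1_def by force
  qed
  have kq1: "Poly_Mapping.lookup m 1 > 0" if "m \<in> Poly_Mapping.keys q1" for m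
  proof -
    have "Poly_Mapping.lookup m 1 \<noteq> 0" "m \<in> Poly_Mapping.keys q"
      using that unfolding q1_def by (auto simp: in_keys_iff lookup_minus lookup_phi split: if_splits)
    then show ?thesis using assms(2) unfolding nn1_def by force
  qed
  have kq: "Poly_Mapping.lookup m 1 \<ge> 0" if "m \<in> Poly_Mapping.keys q" for m
    using that assms(2) unfolding nn1_def by auto
  have e: "p * q = phi p * phi q + (phi p * q1 + p1 * q)"
    unfolding p1_def q1_def by (simp add: algebra_simps)
  have "phi (phi p * q1) = 0"
    by (rule phi_kill) (use keys_mult_pos[of "phi p" "\<lambda>x. x = 0" q1 "\<lambda>x. x > 0"] keys_phi kq1 in force)
  moreover have "phi (p1 * q) = 0"
    by (rule phi_kill) (use keys_mult_pos[of p1 "\<lambda>x. x > 0" q "\<lambda>x. x \<ge> 0"] kp1 kq in force)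
  moreover have "phi (phi p * phi q) = phi p * phi q"
    by (rule phi_id) (use keys_mult_pos[of "phi p" "\<lambda>x. x = 0" "phi q" "\<lambda>x. x = 0"] keys_phi in force)
  ultimately show ?thesis using e by (simp add: phi_add)
qed

lemma nn1_mult: "nn1 p \<Longrightarrow> nn1 q \<Longrightarrow> nn1 (p * q)"
  unfolding nn1_def using keys_mult_pos[of p "\<lambda>x. x \<ge> 0" q "\<lambda>x. x \<ge> 0"] by force

lemma nn1_one: "nn1 1"
  by (simp add: nn1_def lookup_one)

lemma nn1_power: "nn1 p \<Longrightarrow> nn1 (p ^ k)"
  by (induction k) (auto simp: nn1_one nn1_mult)

lemma nn1_prod: "(\<And>i. i \<in> I \<Longrightarrow> nn1 (f i)) \<Longrightarrow> nn1 (\<Prod>i\<in>I. f i)"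
  by (induction I rule: infinite_finite_induct) (auto simp: nn1_one nn1_mult)

lemma phi_power: "nn1 p \<Longrightarrow> phi (p ^ k) = phi p ^ k"
proof (induction k)
  case 0 have "phi 1 = (1::'a lpoly)" by (rule phi_id) (simp add: lookup_one)
  then show ?case by simp
next
  case (Suc k) then show ?case by (simp add: phi_mult nn1_power)
qed

lemma phi_prod: fixes f :: "'b \<Rightarrow> 'a::comm_ring_1 lpoly" shows "(\<And>i. i \<in> I \<Longrightarrow> nn1 (f i)) \<Longrightarrow> phi (\<Prod>i\<in>I. f i) = (\<Prod>i\<in>I. phi (f i))"
proof (induction I rule: infinite_finite_induct)
  case (infinite A) have "phi 1 = (1::'a lpoly)" by (rule phi_id) (simp add: lookup_one)
  then show ?case using infinite by simp
next
  case empty have "phi 1 = (1::'a lpoly)" by (rule phi_id) (simp add: lookup_one)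
  then show ?case by simp
next
  case (insert x F) then show ?case by (simp add: phi_mult nn1_prod)
qed




lemma rspan_add: "p \<in> rspan S \<Longrightarrow> q \<in> rspan S \<Longrightarrow> p + q \<in> rspan S"
proof (induction p rule: rspan.induct)
  case zero then show ?case by simp
next
  case (add s p r)
  have "lconst r * s + (p + q) \<in> rspan S" using rspan.add[OF add.hyps(1) add.IH[OF add.prems]] .
  then show ?case by (simp add: add.assoc)
qed

lemma rspan_smult: "p \<in> rspan S \<Longrightarrow> lconst c * p \<in> rspan S"
proof (induction p rule: rspan.induct)
  case zero then show ?case by (simp add: rspan.zero)
next
  case (add s p r)
  have "lconst c * (lconst r * s + p) = lconst (c * r) * s + lconst c * p"
    by (simp add: algebra_simps lconst_mult_lconst[symmetric])
  then show ?case using add by (simp add: rspan.add)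
qed

lemma rspan_gen: "s \<in> S \<Longrightarrow> s \<in> rspan S"
proof -
  assume "s \<in> S"
  have "lconst 1 * s + 0 \<in> rspan S" by (rule rspan.add[OF \<open>s \<in> S\<close> rspan.zero])
  then show ?thesis by (simp add: lconst_one)
qed

lemma rspan_mono: "p \<in> rspan S \<Longrightarrow> S \<subseteq> T \<Longrightarrow> p \<in> rspan T"
  by (induction p rule: rspan.induct) (auto intro: rspan.intros)

lemma rspan_diff: "p \<in> rspan S \<Longrightarrow> q \<in> rspan S \<Longrightarrow> p - (q::'a::comm_ring_1 lpoly) \<in> rspan S"
  using rspan_add[of p S "lconst (-1) * q"] rspan_smult[of q S "-1"] by (simp add: lconst_minus_one)

lemma rspan_sum: "finite I \<Longrightarrow> (\<And>i. i \<in> I \<Longrightarrow> f i \<in> rspan S) \<Longrightarrow> sum f I \<in> rspan S"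
  by (induction I rule: finite_induct) (auto intro: rspan_add rspan.zero)

lemma Xv_Xinv: "Xv i * Xinv i = (1::'a::comm_ring_1 lpoly)"
proof -
  have "Poly_Mapping.single i 1 + Poly_Mapping.single i (-1) = (0::nat \<Rightarrow>\<^sub>0 int)"
    by (metis add.right_inverse single_add single_zero)
  then show ?thesis by (simp add: Xv_def Xinv_def mult_single)
qed

lemma Xv_pow: "Xv i ^ k = (Poly_Mapping.single (Poly_Mapping.single i (int k)) 1 :: 'a::comm_ring_1 lpoly)"
proof (induction k)
  case 0 then show ?case by simp
next
  case (Suc k)
  have "Poly_Mapping.single i 1 + Poly_Mapping.single i (int k) = Poly_Mapping.single i (int (Suc k))"
    by (metis of_nat_Suc add.commute single_add)
  then show ?case using Suc by (simp add: Xv_def mult_single)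
qed

lemma single_prod:
  "(\<Prod>j\<in>J. Poly_Mapping.single (e j) (1::'a::comm_ring_1)) = Poly_Mapping.single (\<Sum>j\<in>J. e j) 1"
  by (induction J rule: infinite_finite_induct) (simp_all add: mult_single)

lemma mono_as_prod:
  assumes "finite J" "\<And>j. Poly_Mapping.lookup m j \<noteq> 0 \<Longrightarrow> j \<in> J \<and> Poly_Mapping.lookup m j > 0"
  shows "(Poly_Mapping.single m 1 :: 'a::comm_ring_1 lpoly) = (\<Prod>j\<in>J. Xv j ^ nat (Poly_Mapping.lookup m j))"
proof -
  have "m = (\<Sum>j\<in>J. Poly_Mapping.single j (int (nat (Poly_Mapping.lookup m j))))"
  proof (rule poly_mapping_eqI)
    fix k
    have "(\<Sum>j\<in>J. Poly_Mapping.lookup (Poly_Mapping.single j (int (nat (Poly_Mapping.lookup m j)))) k)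
       = (\<Sum>j\<in>J. if j = k then int (nat (Poly_Mapping.lookup m j)) else 0)"
      by (rule sum.cong) (auto simp: lookup_single when_def)
    also have "\<dots> = Poly_Mapping.lookup m k"
    proof -
      have "(\<Sum>j\<in>J. if j = k then int (nat (Poly_Mapping.lookup m j)) else 0) =
            (if k \<in> J then int (nat (Poly_Mapping.lookup m k)) else 0)"
        using assms(1) by (rule sum.delta)
      moreover have "Poly_Mapping.lookup m k \<ge> 0" using assms(2)[of k] by force
      moreover have "k \<notin> J \<Longrightarrow> Poly_Mapping.lookup m k = 0" using assms(2)[of k] by blast
      ultimately show ?thesis by simp
    qed
    finally show "Poly_Mapping.lookup m k = Poly_Mapping.lookup (\<Sum>j\<in>J. Poly_Mapping.single j (int (nat (Poly_Mapping.lookup m j)))) k"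
      by (simp add: lookup_sum)
  qed
  then show ?thesis unfolding Xv_pow single_prod
    by (rule arg_cong[where f = "\<lambda>x. Poly_Mapping.single x 1"])
qed

lemma poly_expand: "p = (\<Sum>m\<in>Poly_Mapping.keys p. lconst (Poly_Mapping.lookup p m) * Poly_Mapping.single m 1)"
proof (rule poly_mapping_eqI)
  fix k
  have "(\<Sum>m\<in>Poly_Mapping.keys p. Poly_Mapping.lookup (lconst (Poly_Mapping.lookup p m) * Poly_Mapping.single m 1) k)
     = (\<Sum>m\<in>Poly_Mapping.keys p. if m = k then Poly_Mapping.lookup p m else 0)"
    by (rule sum.cong) (auto simp: lookup_lconst_mult lookup_single when_def)
  also have "\<dots> = (if k \<in> Poly_Mapping.keys p then Poly_Mapping.lookup p k else 0)"
    by (rule sum.delta) simp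
  also have "\<dots> = Poly_Mapping.lookup p k" by (simp add: in_keys_iff)
  finally show "Poly_Mapping.lookup p k = Poly_Mapping.lookup (\<Sum>m\<in>Poly_Mapping.keys p. lconst (Poly_Mapping.lookup p m) * Poly_Mapping.single m 1) k"
    by (simp add: lookup_sum)
qed

definition LT :: "'a::comm_ring_1 lpoly \<Rightarrow> (nat \<Rightarrow>\<^sub>0 int) \<Rightarrow> bool" where
  "LT p e \<longleftrightarrow> Poly_Mapping.lookup p e = 1 \<and> (\<forall>m\<in>Poly_Mapping.keys p. m \<noteq> e \<longrightarrow> e < m)"

lemma LT_single: "LT (Poly_Mapping.single e 1) e"
  by (simp add: LT_def)

lemma LT_one: "LT 1 0"
  by (simp add: LT_def lookup_one)

lemma LT_mult:
  fixes p q :: "'a::comm_ring_1 lpoly"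
  assumes p: "LT p e" and q: "LT q f"
  shows "LT (p * q) (e + f)"
proof -
  define r where "r = p - Poly_Mapping.single e 1"
  define s where "s = q - Poly_Mapping.single f 1"
  have kr: "e < m" if "m \<in> Poly_Mapping.keys r" for m
  proof -
    have "m \<in> Poly_Mapping.keys p" "m \<noteq> e" using that p unfolding r_def LT_def
      by (auto simp: in_keys_iff lookup_minus lookup_single when_def split: if_splits)
    then show ?thesis using p unfolding LT_def by auto
  qed
  have ks: "f < m" if "m \<in> Poly_Mapping.keys s" for m
  proof -
    have "m \<in> Poly_Mapping.keys q" "m \<noteq> f" using that q unfolding s_def LT_def
      by (auto simp: in_keys_iff lookup_minus lookup_single when_def split: if_splits)
    then show ?thesis using q unfolding LT_def by auto
  qed
  have kq: "f \<le> m" if "m \<in> Poly_Mapping.keys q" for m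
    using q that unfolding LT_def by (cases "m = f") auto
  define t where "t = Poly_Mapping.single e 1 * s + r * q"
  have e1: "p * q = Poly_Mapping.single (e + f) 1 + t"
  proof -
    have pe: "p = Poly_Mapping.single e 1 + r" and qe: "q = Poly_Mapping.single f 1 + s"
      unfolding r_def s_def by simp_all
    have "p * q = Poly_Mapping.single e 1 * q + r * q" by (subst pe) (simp only: distrib_right)
    also have "Poly_Mapping.single e 1 * q = Poly_Mapping.single e 1 * Poly_Mapping.single f 1 + Poly_Mapping.single e 1 * s"
      by (subst qe) (simp only: distrib_left)
    finally show ?thesis unfolding t_def by (simp add: mult_single add.assoc)
  qed
  have kt: "e + f < m" if "m \<in> Poly_Mapping.keys t" for m
  proof -
    from that have "m \<in> Poly_Mapping.keys (Poly_Mapping.single e 1 * s) \<union> Poly_Mapping.keys (r * q)"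
      unfolding t_def by (rule subsetD[OF keys_add])
    then show ?thesis
    proof
      assume "m \<in> Poly_Mapping.keys (Poly_Mapping.single e (1::'a) * s)"
      from subsetD[OF keys_mult this] obtain a b where "m = a + b" "a \<in> Poly_Mapping.keys (Poly_Mapping.single e (1::'a))" "b \<in> Poly_Mapping.keys s"
        by auto
      then have "m = e + b" "f < b" using ks by auto
      then show ?thesis by simp
    next
      assume "m \<in> Poly_Mapping.keys (r * q)"
      from subsetD[OF keys_mult this] obtain a b where "m = a + b" "a \<in> Poly_Mapping.keys r" "b \<in> Poly_Mapping.keys q"
        by auto
      then show ?thesis using add_less_le_mono[OF kr kq] by simp
    qed
  qed
  have "Poly_Mapping.lookup t (e + f) = 0" using kt[of "e+f"] by (auto simp: in_keys_iff)
  then have "Poly_Mapping.lookup (p * q) (e + f) = 1" by (simp add: e1 lookup_add)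
  moreover have "e + f < m" if "m \<in> Poly_Mapping.keys (p * q)" "m \<noteq> e + f" for m
  proof -
    have "Poly_Mapping.lookup t m \<noteq> 0" using that by (simp add: e1 lookup_add lookup_single in_keys_iff when_def)
    then show ?thesis using kt by (simp add: in_keys_iff)
  qed
  ultimately show ?thesis by (simp add: LT_def)
qed

primrec rep :: "nat \<Rightarrow> (nat \<Rightarrow>\<^sub>0 int) \<Rightarrow> (nat \<Rightarrow>\<^sub>0 int)" where
  "rep 0 e = 0"
| "rep (Suc k) e = e + rep k e"

lemma lookup_rep: "Poly_Mapping.lookup (rep k e) j = int k * Poly_Mapping.lookup e j"
  by (induction k) (simp_all add: lookup_add algebra_simps)

lemma LT_power: "LT p e \<Longrightarrow> LT (p ^ k) (rep k e)"
  by (induction k) (simp_all add: LT_one LT_mult)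

lemma LT_prod:
  fixes f :: "'b \<Rightarrow> 'a::comm_ring_1 lpoly"
  shows "finite I \<Longrightarrow> (\<And>i. i \<in> I \<Longrightarrow> LT (f i) (e i)) \<Longrightarrow> LT (\<Prod>i\<in>I. f i) (\<Sum>i\<in>I. e i)"
  by (induction I rule: finite_induct) (simp_all add: LT_one LT_mult)

lemma LT_indep:
  fixes P :: "'b \<Rightarrow> 'a::comm_ring_1 lpoly"
  assumes fin: "finite T" and lt: "\<And>x. x \<in> T \<Longrightarrow> LT (P x) (E x)" and inj: "inj_on E T"
    and z: "(\<Sum>x\<in>T. lconst (c x) * P x) = 0"
  shows "\<forall>x\<in>T. c x = 0"
proof (rule ccontr)
  assume nt: "\<not> (\<forall>x\<in>T. c x = 0)"
  define T0 where "T0 = {x\<in>T. c x \<noteq> 0}"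
  have T0ne: "T0 \<noteq> {}" and fT0: "finite T0" using nt fin unfolding T0_def by auto
  define e0 where "e0 = Min (E ` T0)"
  have "e0 \<in> E ` T0" unfolding e0_def using T0ne fT0 by simp
  then obtain x0 where x0: "x0 \<in> T0" "E x0 = e0" by auto
  have mn: "e0 \<le> E x" if "x \<in> T0" for x unfolding e0_def using fT0 that by simp
  have "Poly_Mapping.lookup (\<Sum>x\<in>T. lconst (c x) * P x) e0 = (\<Sum>x\<in>T. c x * Poly_Mapping.lookup (P x) e0)"
    by (simp add: lookup_sum lookup_lconst_mult)
  also have "\<dots> = c x0 * Poly_Mapping.lookup (P x0) e0 + (\<Sum>x\<in>T - {x0}. c x * Poly_Mapping.lookup (P x) e0)"
    using x0 fin by (subst sum.remove[of T x0]) (auto simp: T0_def)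
  also have "(\<Sum>x\<in>T - {x0}. c x * Poly_Mapping.lookup (P x) e0) = 0"
  proof (rule sum.neutral, rule ballI)
    fix x assume x: "x \<in> T - {x0}"
    show "c x * Poly_Mapping.lookup (P x) e0 = 0"
    proof (cases "c x = 0")
      case False
      then have "x \<in> T0" using x by (simp add: T0_def)
      then have "e0 \<le> E x" by (rule mn)
      moreover have "E x \<noteq> e0" using inj x x0 by (auto simp: T0_def inj_on_def)
      ultimately have lt0: "e0 < E x" by simp
      have "Poly_Mapping.lookup (P x) e0 = 0"
      proof (rule ccontr)
        assume "Poly_Mapping.lookup (P x) e0 \<noteq> 0"
        then have "e0 \<in> Poly_Mapping.keys (P x)" by (simp add: in_keys_iff)
        then have "E x < e0" using lt[of x] x \<open>E x \<noteq> e0\<close> unfolding LT_def by auto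
        then show False using lt0 by simp
      qed
      then show ?thesis by simp
    qed simp
  qed
  finally have "c x0 = 0" using z lt[of x0] x0 by (simp add: LT_def T0_def)
  then show False using x0 by (simp add: T0_def)
qed




lemma less_pm_iff: "(a::nat \<Rightarrow>\<^sub>0 int) < b \<longleftrightarrow> less_fun (Poly_Mapping.lookup a) (Poly_Mapping.lookup b)"
  by transfer simp

definition supp_n :: "nat \<Rightarrow> (nat \<Rightarrow>\<^sub>0 int) \<Rightarrow> bool" where
  "supp_n n m \<longleftrightarrow> (\<forall>i. Poly_Mapping.lookup m i \<noteq> 0 \<longrightarrow> i \<in> {1..n})"

lemma less_to_lex:
  assumes "supp_n n a" "supp_n n b" "a < b"
  shows "lex_less n a b"
proof -
  from assms(3) obtain k where k: "Poly_Mapping.lookup a k < Poly_Mapping.lookup b k"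
    "\<And>k'. k' < k \<Longrightarrow> Poly_Mapping.lookup a k' = Poly_Mapping.lookup b k'"
    unfolding less_pm_iff less_fun_def by blast
  have "Poly_Mapping.lookup a k \<noteq> 0 \<or> Poly_Mapping.lookup b k \<noteq> 0" using k(1) by auto
  then have "k \<in> {1..n}" using assms(1,2) unfolding supp_n_def by auto
  then show ?thesis unfolding lex_less_def using k(1) k(2) by (intro bexI[of _ k] conjI ballI) auto
qed

lemma lex_to_less:
  assumes "supp_n n a" "supp_n n b" "lex_less n a b"
  shows "a < b"
proof -
  from assms(3) obtain i where i: "i \<in> {1..n}" "\<forall>j\<in>{1..<i}. Poly_Mapping.lookup a j = Poly_Mapping.lookup b j"
    "Poly_Mapping.lookup a i < Poly_Mapping.lookup b i" unfolding lex_less_def by blast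
  have "Poly_Mapping.lookup a k' = Poly_Mapping.lookup b k'" if "k' < i" for k'
  proof (cases "k' = 0")
    case True
    then have "Poly_Mapping.lookup a k' = 0" "Poly_Mapping.lookup b k' = 0"
      using assms(1,2) unfolding supp_n_def by auto
    then show ?thesis by simp
  next
    case False then show ?thesis using i(2) that by auto
  qed
  then show ?thesis unfolding less_pm_iff less_fun_def using i(3) by blast
qed

lemma lexfirst_prop:
  assumes "\<And>m. m \<in> Poly_Mapping.keys p \<Longrightarrow> supp_n n m" "p \<noteq> 0"
  shows "lexfirst_exp n p \<in> Poly_Mapping.keys p \<and>
    (\<forall>e'\<in>Poly_Mapping.keys p. e' \<noteq> lexfirst_exp n p \<longrightarrow> lex_less n (lexfirst_exp n p) e')"
proof -
  define e0 where "e0 = Min (Poly_Mapping.keys p)"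
  have ne: "Poly_Mapping.keys p \<noteq> {}" using assms(2) by simp
  have e0k: "e0 \<in> Poly_Mapping.keys p" unfolding e0_def using ne by simp
  have e0min: "e0 \<le> e" if "e \<in> Poly_Mapping.keys p" for e unfolding e0_def using that by simp
  have P: "e0 \<in> Poly_Mapping.keys p \<and> (\<forall>e'\<in>Poly_Mapping.keys p. e' \<noteq> e0 \<longrightarrow> lex_less n e0 e')"
  proof (intro conjI ballI impI)
    show "e0 \<in> Poly_Mapping.keys p" by (fact e0k)
    fix e' assume "e' \<in> Poly_Mapping.keys p" "e' \<noteq> e0"
    then have "e0 < e'" using e0min[of e'] by simp
    then show "lex_less n e0 e'" using assms(1) e0k \<open>e' \<in> Poly_Mapping.keys p\<close> by (intro less_to_lex)
  qed
  have "lexfirst_exp n p = e0" unfolding lexfirst_exp_def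
  proof (rule the_equality)
    show "e0 \<in> Poly_Mapping.keys p \<and> (\<forall>e'\<in>Poly_Mapping.keys p. e' \<noteq> e0 \<longrightarrow> lex_less n e0 e')" by (fact P)
  next
    fix e assume e: "e \<in> Poly_Mapping.keys p \<and> (\<forall>e'\<in>Poly_Mapping.keys p. e' \<noteq> e \<longrightarrow> lex_less n e e')"
    show "e = e0"
    proof (rule ccontr)
      assume "e \<noteq> e0"
      then have "lex_less n e e0" using e e0k by auto
      then have "e < e0" using assms(1) e e0k by (intro lex_to_less) auto
      then show False using e0min e by (meson leD)
    qed
  qed
  then show ?thesis using P by simp
qed




context
  fixes n :: nat and F :: "nat \<Rightarrow> 'a::comm_ring_1 lpoly"
  assumes n2: "n \<ge> 2" and seed: "LP_seed n F" and cond: "condition_1_2 n F"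
begin

lemma F_poly: "i \<in> {1..n} \<Longrightarrow> is_poly n (F i) \<and> F i \<noteq> 0"
  using seed unfolding LP_seed_def irreducible_poly_def by auto

lemma F_keys: "i \<in> {1..n} \<Longrightarrow> m \<in> Poly_Mapping.keys (F i) \<Longrightarrow> Poly_Mapping.lookup m j \<noteq> 0 \<Longrightarrow>
   j \<in> {1..n} \<and> Poly_Mapping.lookup m j > 0"
  using F_poly unfolding is_poly_def by blast

lemma F_nn1: assumes "i \<in> {1..n}" shows "nn1 (F i)"
  unfolding nn1_def
proof
  fix m assume "m \<in> Poly_Mapping.keys (F i)"
  then show "0 \<le> Poly_Mapping.lookup m 1" using F_keys[of i m 1] assms by (cases "Poly_Mapping.lookup m 1 = 0") auto
qed

lemma condk: "k \<in> {1..n} \<Longrightarrow> hatF n F k = F k \<and>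
     (k < n \<longrightarrow> Poly_Mapping.lookup (F k) (lexfirst_exp n (F k)) = 1 \<and>
        (\<forall>i. Poly_Mapping.lookup (lexfirst_exp n (F k)) i \<noteq> 0 \<longrightarrow> k < i \<and> i \<le> n \<and> Poly_Mapping.lookup (lexfirst_exp n (F k)) i > 0)) \<and>
     (k = n \<longrightarrow> lexfirst n (F k) = 1)"
  using bspec[OF cond[unfolded condition_1_2_def]] by blast

lemma xprime_eq: "i \<in> {1..n} \<Longrightarrow> xprime n F i = F i * Xinv i"
  unfolding xprime_def using conjunct1[OF condk] by metis

lemma nn1_Xv: "nn1 (Xv i :: 'a lpoly)"
  by (simp add: nn1_def Xv_def lookup_single when_def)

lemma nn1_Xinv: "i \<noteq> 1 \<Longrightarrow> nn1 (Xinv i :: 'a lpoly)"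
  by (simp add: nn1_def Xinv_def lookup_single when_def)

lemma phi_Xv: "i \<noteq> 1 \<Longrightarrow> phi (Xv i :: 'a lpoly) = Xv i"
  by (rule phi_id) (simp add: Xv_def lookup_single when_def)

lemma phi_Xinv: "i \<noteq> 1 \<Longrightarrow> phi (Xinv i :: 'a lpoly) = Xinv i"
  by (rule phi_id) (simp add: Xinv_def lookup_single when_def)

lemma nn1_xprime: "i \<in> {2..n} \<Longrightarrow> nn1 (xprime n F i)"
  using xprime_eq[of i] F_nn1[of i] nn1_Xinv[of i] by (simp add: nn1_mult)

lemma nn1_xmono: "nn1 (xmono n F a b)"
  unfolding xmono_def by (intro nn1_prod nn1_mult nn1_power nn1_Xv nn1_xprime) auto

definition G :: "nat \<Rightarrow> 'a lpoly" where "G i = phi (F i)"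

lemma nn1_G: "nn1 (G i)"
  unfolding nn1_def G_def using keys_phi by fastforce

lemma phi_xprime: "i \<in> {2..n} \<Longrightarrow> phi (xprime n F i) = G i * Xinv i"
  using xprime_eq[of i] F_nn1[of i] nn1_Xinv[of i] by (simp add: phi_mult phi_Xinv G_def)

lemma phi_xmono: "phi (xmono n F a b) = (\<Prod>i\<in>{2..n}. Xv i ^ a i * (G i * Xinv i) ^ b i)"
  unfolding xmono_def
  by (subst phi_prod) (auto intro!: prod.cong nn1_mult nn1_power nn1_Xv nn1_xprime
      simp: phi_mult phi_power nn1_power nn1_Xv nn1_xprime phi_Xv phi_xprime)

definition M :: "nat \<Rightarrow> nat \<Rightarrow>\<^sub>0 int" where "M i = lexfirst_exp n (F i)"

lemma M_prop: "i \<in> {1..n} \<Longrightarrow> Poly_Mapping.lookup (F i) (M i) = 1 \<and>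
   (\<forall>j. Poly_Mapping.lookup (M i) j \<noteq> 0 \<longrightarrow> i < j \<and> j \<le> n)"
proof -
  assume i: "i \<in> {1..n}"
  show ?thesis
  proof (cases "i < n")
    case True
    have "i < n \<longrightarrow> Poly_Mapping.lookup (F i) (lexfirst_exp n (F i)) = 1 \<and>
        (\<forall>j. Poly_Mapping.lookup (lexfirst_exp n (F i)) j \<noteq> 0 \<longrightarrow> i < j \<and> j \<le> n \<and> Poly_Mapping.lookup (lexfirst_exp n (F i)) j > 0)"
      using condk[OF i] by (rule conjunct1[OF conjunct2])
    then show ?thesis using True unfolding M_def by blast
  next
    case False
    then have "i = n" using i by auto
    have "i = n \<longrightarrow> lexfirst n (F i) = 1" using condk[OF i] by (rule conjunct2[OF conjunct2])
    then have "lexfirst n (F i) = 1" using \<open>i = n\<close> by blast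
    then have eq: "Poly_Mapping.single (M i) (Poly_Mapping.lookup (F i) (M i)) = Poly_Mapping.single 0 1"
      by (simp add: lexfirst_def lmonom_def M_def)
    have "(Poly_Mapping.lookup (F i) (M i) when M i = 0) = 1"
      using arg_cong[OF eq, of "\<lambda>p. Poly_Mapping.lookup p 0"] by (simp add: lookup_single)
    then have "M i = 0" "Poly_Mapping.lookup (F i) (M i) = 1" by (auto simp: when_def split: if_splits)
    then show ?thesis by simp
  qed
qed

lemma LT_G: "i \<in> {2..n} \<Longrightarrow> LT (G i) (M i)"
proof -
  assume i: "i \<in> {2..n}"
  then have i1: "i \<in> {1..n}" by auto
  have sup: "supp_n n m" if "m \<in> Poly_Mapping.keys (F i)" for m
    using F_keys[OF i1 that] unfolding supp_n_def by blast
  have lf: "M i \<in> Poly_Mapping.keys (F i) \<and>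
    (\<forall>e'\<in>Poly_Mapping.keys (F i). e' \<noteq> M i \<longrightarrow> lex_less n (M i) e')"
    unfolding M_def by (rule lexfirst_prop) (use sup F_poly[OF i1] in auto)
  have M1: "Poly_Mapping.lookup (M i) 1 = 0" using M_prop[OF i1] i by force
  have "Poly_Mapping.lookup (G i) (M i) = 1" using M_prop[OF i1] M1 by (simp add: G_def lookup_phi)
  moreover have "M i < m" if "m \<in> Poly_Mapping.keys (G i)" "m \<noteq> M i" for m
  proof -
    have "m \<in> Poly_Mapping.keys (F i)" using keys_phi that(1) unfolding G_def by blast
    then show ?thesis using lf that(2) sup by (intro lex_to_less) auto
  qed
  ultimately show ?thesis by (simp add: LT_def)
qed

definition L :: "(nat \<Rightarrow> nat) \<Rightarrow> (nat \<Rightarrow> nat) \<Rightarrow> nat \<Rightarrow>\<^sub>0 int" where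
  "L a b = (\<Sum>i\<in>{2..n}. rep (a i) (Poly_Mapping.single i 1) + rep (b i) (M i + Poly_Mapping.single i (-1)))"

lemma LT_phi_xmono: "LT (phi (xmono n F a b)) (L a b)"
  unfolding phi_xmono L_def
  by (intro LT_prod LT_mult LT_power LT_G)
     (auto simp: Xv_def Xinv_def LT_single)


lemma lookup_L: "Poly_Mapping.lookup (L a b) j =
   (if j \<in> {2..n} then int (a j) - int (b j) else 0) + (\<Sum>i\<in>{2..n}. int (b i) * Poly_Mapping.lookup (M i) j)"
proof -
  have "Poly_Mapping.lookup (L a b) j = (\<Sum>i\<in>{2..n}. (if i = j then int (a i) - int (b i) else 0) + int (b i) * Poly_Mapping.lookup (M i) j)"
    unfolding L_def lookup_sum
    by (rule sum.cong[OF refl]) (simp add: lookup_add lookup_rep lookup_single when_def ring_distribs)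
  also have "\<dots> = (\<Sum>i\<in>{2..n}. (if i = j then int (a i) - int (b i) else 0)) + (\<Sum>i\<in>{2..n}. int (b i) * Poly_Mapping.lookup (M i) j)"
    by (rule sum.distrib)
  also have "(\<Sum>i\<in>{2..n}. (if i = j then int (a i) - int (b i) else 0)) = (if j \<in> {2..n} then int (a j) - int (b j) else 0)"
    by (rule sum.delta) simp
  finally show ?thesis .
qed

lemma M_low: "i \<in> {2..n} \<Longrightarrow> Poly_Mapping.lookup (M i) j \<noteq> 0 \<Longrightarrow> i < j"
proof -
  assume "i \<in> {2..n}" "Poly_Mapping.lookup (M i) j \<noteq> 0"
  moreover have "i \<in> {1..n}" using \<open>i \<in> {2..n}\<close> by simp
  ultimately show ?thesis using M_prop[of i] by blast
qed

definition NS :: "((nat \<Rightarrow> nat) \<times> (nat \<Rightarrow> nat)) set" where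
  "NS = {(a,b). (\<forall>i. i \<notin> {2..n} \<longrightarrow> a i = 0 \<and> b i = 0) \<and> (\<forall>i\<in>{2..n}. a i = 0 \<or> b i = 0)}"

lemma L_inj:
  assumes ab: "(a,b) \<in> NS" and ab': "(a',b') \<in> NS" and eq: "L a b = L a' b'"
  shows "a = a' \<and> b = b'"
proof -
  have "a j = a' j \<and> b j = b' j" for j
  proof (induction j rule: less_induct)
    case (less j)
    show ?case
    proof (cases "j \<in> {2..n}")
      case False then show ?thesis using ab ab' unfolding NS_def by auto
    next
      case True
      have s: "(\<Sum>i\<in>{2..n}. int (b i) * Poly_Mapping.lookup (M i) j) = (\<Sum>i\<in>{2..n}. int (b' i) * Poly_Mapping.lookup (M i) j)"
      proof (rule sum.cong)
        fix i assume i: "i \<in> {2..n}"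
        show "int (b i) * Poly_Mapping.lookup (M i) j = int (b' i) * Poly_Mapping.lookup (M i) j"
        proof (cases "Poly_Mapping.lookup (M i) j = 0")
          case False then have "i < j" using M_low i by blast
          then show ?thesis using less by simp
        qed simp
      qed simp
      have "Poly_Mapping.lookup (L a b) j = Poly_Mapping.lookup (L a' b') j" using eq by simp
      then have "int (a j) - int (b j) = int (a' j) - int (b' j)" using True s by (simp add: lookup_L)
      moreover have "a j = 0 \<or> b j = 0" "a' j = 0 \<or> b' j = 0" using ab ab' True unfolding NS_def by auto
      ultimately show ?thesis by auto
    qed
  qed
  then show ?thesis by auto
qed

definition nz :: "(nat \<Rightarrow> nat) \<Rightarrow> nat \<Rightarrow> nat" where
  "nz f i = (if i \<in> {2..n} then f i else 0)"

lemma xmono_nz: "xmono n F a b = xmono n F (nz a) (nz b)"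
  unfolding xmono_def by (rule prod.cong) (auto simp: nz_def)

lemma lconst_add: "lconst (x + y) = lconst x + (lconst y :: 'a lpoly)"
  by (simp add: lconst_def single_add)

lemma lconst_zero: "lconst 0 = (0 :: 'a lpoly)"
  by (simp add: lconst_def)

lemma st_rep:
  assumes "s \<in> alg_st n F"
  shows "\<exists>T c. finite T \<and> T \<subseteq> NS \<and> s = (\<Sum>x\<in>T. lconst (c x) * xmono n F (fst x) (snd x))"
  using assms unfolding alg_st_def
proof (induction s rule: rspan.induct)
  case zero
  show ?case by (rule exI[of _ "{}"]) simp
next
  case (add g p r)
  from add.hyps(1) obtain a b where g: "g = xmono n F a b" and std: "\<forall>i\<in>{2..n}. a i = 0 \<or> b i = 0" by blast
  from add.IH obtain T c where T: "finite T" "T \<subseteq> NS" and p: "p = (\<Sum>x\<in>T. lconst (c x) * xmono n F (fst x) (snd x))"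
    by blast
  define x0 where "x0 = (nz a, nz b)"
  have x0NS: "x0 \<in> NS" unfolding x0_def NS_def nz_def using std by auto
  have gx0: "g = xmono n F (fst x0) (snd x0)" unfolding x0_def g using xmono_nz[of a b] by simp
  let ?X = "\<lambda>x. xmono n F (fst x) (snd x)"
  show ?case
  proof (cases "x0 \<in> T")
    case True
    define c' where "c' = c(x0 := c x0 + r)"
    have "(\<Sum>x\<in>T. lconst (c' x) * ?X x) = lconst (c' x0) * ?X x0 + (\<Sum>x\<in>T - {x0}. lconst (c' x) * ?X x)"
      using True T by (simp add: sum.remove)
    also have "(\<Sum>x\<in>T - {x0}. lconst (c' x) * ?X x) = (\<Sum>x\<in>T - {x0}. lconst (c x) * ?X x)"
      by (rule sum.cong) (auto simp: c'_def)
    also have "lconst (c' x0) * ?X x0 = lconst r * g + lconst (c x0) * ?X x0"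
      by (simp add: c'_def lconst_add gx0 algebra_simps)
    finally have "(\<Sum>x\<in>T. lconst (c' x) * ?X x) = lconst r * g + (lconst (c x0) * ?X x0 + (\<Sum>x\<in>T - {x0}. lconst (c x) * ?X x))"
      by (simp add: add.assoc)
    also have "lconst (c x0) * ?X x0 + (\<Sum>x\<in>T - {x0}. lconst (c x) * ?X x) = p"
      using True T p by (simp add: sum.remove)
    finally show ?thesis using T by (intro exI[of _ T] exI[of _ c']) simp
  next
    case False
    define c' where "c' = c(x0 := r)"
    have "(\<Sum>x\<in>insert x0 T. lconst (c' x) * ?X x) = lconst (c' x0) * ?X x0 + (\<Sum>x\<in>T. lconst (c' x) * ?X x)"
      using False T by simp
    also have "(\<Sum>x\<in>T. lconst (c' x) * ?X x) = (\<Sum>x\<in>T. lconst (c x) * ?X x)"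
      by (rule sum.cong) (use False in \<open>auto simp: c'_def\<close>)
    finally have "(\<Sum>x\<in>insert x0 T. lconst (c' x) * ?X x) = lconst r * g + p"
      using p gx0 by (simp add: c'_def)
    moreover have "finite (insert x0 T)" "insert x0 T \<subseteq> NS" using T x0NS by auto
    ultimately show ?thesis by (intro exI[of _ "insert x0 T"] exI[of _ c']) simp
  qed
qed

lemma phi_sum: "finite T \<Longrightarrow> phi (\<Sum>x\<in>T. f x) = (\<Sum>x\<in>T. phi (f x))"
  by (induction T rule: finite_induct) (simp_all add: phi_zero phi_add)

lemma inj0:
  assumes s: "s \<in> alg_st n F" and z: "phi s = 0"
  shows "s = 0"
proof -
  obtain T c where T: "finite T" "T \<subseteq> NS" and se: "s = (\<Sum>x\<in>T. lconst (c x) * xmono n F (fst x) (snd x))"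
    using st_rep[OF s] by blast
  have "(\<Sum>x\<in>T. lconst (c x) * phi (xmono n F (fst x) (snd x))) = 0"
    using z unfolding se by (simp add: phi_sum[OF T(1)] phi_lconst)
  moreover have "inj_on (\<lambda>x. L (fst x) (snd x)) T"
  proof (rule inj_onI)
    fix x y assume "x \<in> T" "y \<in> T" "L (fst x) (snd x) = L (fst y) (snd y)"
    then show "x = y" using L_inj[of "fst x" "snd x" "fst y" "snd y"] T(2) by (auto simp: prod_eq_iff)
  qed
  ultimately have "\<forall>x\<in>T. c x = 0"
    using LT_indep[OF T(1), of "\<lambda>x. phi (xmono n F (fst x) (snd x))" "\<lambda>x. L (fst x) (snd x)" c] LT_phi_xmono
    by blast
  then show ?thesis unfolding se by (simp add: lconst_zero)
qed


definition Q :: "'a lpoly set" where "Q = {p. \<exists>s\<in>alg_st n F. phi p = phi s}"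

lemma st_sub_A: "s \<in> alg_st n F \<Longrightarrow> s \<in> alg_A n F"
  unfolding alg_st_def alg_A_def by (erule rspan_mono) blast

lemma Q_st: "s \<in> alg_st n F \<Longrightarrow> s \<in> Q"
  unfolding Q_def by blast

lemma Q_zero: "0 \<in> Q"
  using Q_st rspan.zero unfolding alg_st_def by blast

lemma Q_add: "p \<in> Q \<Longrightarrow> q \<in> Q \<Longrightarrow> p + q \<in> Q"
proof -
  assume "p \<in> Q" "q \<in> Q"
  then obtain s t where "s \<in> alg_st n F" "phi p = phi s" "t \<in> alg_st n F" "phi q = phi t"
    unfolding Q_def by blast
  moreover have "s + t \<in> alg_st n F" using calculation unfolding alg_st_def by (intro rspan_add)
  ultimately show ?thesis unfolding Q_def by (intro CollectI bexI[of _ "s + t"]) (simp_all add: phi_add)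
qed

lemma Q_lconst: "p \<in> Q \<Longrightarrow> lconst c * p \<in> Q"
proof -
  assume "p \<in> Q"
  then obtain s where "s \<in> alg_st n F" "phi p = phi s"
    unfolding Q_def by blast
  moreover have "lconst c * s \<in> alg_st n F" using calculation unfolding alg_st_def by (intro rspan_smult)
  ultimately show ?thesis unfolding Q_def by (intro CollectI bexI[of _ "lconst c * s"]) (simp_all add: phi_lconst)
qed

lemma Q_sum: "finite I \<Longrightarrow> (\<And>i. i \<in> I \<Longrightarrow> f i \<in> Q) \<Longrightarrow> sum f I \<in> Q"
  by (induction I rule: finite_induct) (auto intro: Q_add Q_zero)

lemma Q_phi: "q \<in> Q \<Longrightarrow> phi p = phi q \<Longrightarrow> p \<in> Q"
  unfolding Q_def by auto

lemma xmono_split: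
  assumes i: "i \<in> {2..n}" "a i > 0" "b i > 0"
  shows "xmono n F a b = F i * xmono n F (a(i := a i - 1)) (b(i := b i - 1))"
proof -
  let ?a' = "a(i := a i - 1)" and ?b' = "b(i := b i - 1)"
  let ?f = "\<lambda>j. Xv j ^ a j * xprime n F j ^ b j"
  let ?f' = "\<lambda>j. Xv j ^ ?a' j * xprime n F j ^ ?b' j"
  have r: "(\<Prod>j\<in>{2..n} - {i}. ?f' j) = (\<Prod>j\<in>{2..n} - {i}. ?f j)"
    by (rule prod.cong) auto
  have e1: "xmono n F a b = ?f i * (\<Prod>j\<in>{2..n} - {i}. ?f j)"
    unfolding xmono_def using i(1) by (simp add: prod.remove)
  have e2: "xmono n F ?a' ?b' = ?f' i * (\<Prod>j\<in>{2..n} - {i}. ?f j)"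
    unfolding xmono_def using i(1) r by (simp add: prod.remove)
  have a: "a i = Suc (a i - 1)" and b: "b i = Suc (b i - 1)" using i by auto
  have "?f i = (Xv i * xprime n F i) * ?f' i"
    by (subst a, subst b) (simp add: mult_ac)
  also have "Xv i * xprime n F i = F i"
  proof -
    have "Xv i * xprime n F i = (Xv i * Xinv i) * F i" using xprime_eq[of i] i(1) by (simp add: mult_ac)
    then show ?thesis by (simp add: Xv_Xinv)
  qed
  finally show ?thesis using e1 e2 by (simp add: mult_ac)
qed

lemma G_keys: "i \<in> {2..n} \<Longrightarrow> m \<in> Poly_Mapping.keys (G i) \<Longrightarrow> Poly_Mapping.lookup m j \<noteq> 0 \<Longrightarrow>
    j \<in> {2..n} \<and> Poly_Mapping.lookup m j > 0"
proof -
  assume i: "i \<in> {2..n}" and m: "m \<in> Poly_Mapping.keys (G i)" and j: "Poly_Mapping.lookup m j \<noteq> 0"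
  have "m \<in> Poly_Mapping.keys (F i)" "Poly_Mapping.lookup m 1 = 0" using keys_phi m unfolding G_def by blast+
  moreover have "i \<in> {1..n}" using i by simp
  ultimately show ?thesis using F_keys[of i m j] j by (cases "j = 1") auto
qed

lemma single_xmono:
  assumes "\<And>j. Poly_Mapping.lookup m j \<noteq> 0 \<Longrightarrow> j \<in> {2..n} \<and> Poly_Mapping.lookup m j > 0"
  shows "Poly_Mapping.single m 1 * xmono n F a b = xmono n F (\<lambda>j. a j + nat (Poly_Mapping.lookup m j)) b"
proof -
  have "Poly_Mapping.single m 1 * xmono n F a b =
     (\<Prod>j\<in>{2..n}. Xv j ^ nat (Poly_Mapping.lookup m j)) * (\<Prod>j\<in>{2..n}. Xv j ^ a j * xprime n F j ^ b j)"
  proof -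
    have "(Poly_Mapping.single m 1 :: 'a lpoly) = (\<Prod>j\<in>{2..n}. Xv j ^ nat (Poly_Mapping.lookup m j))"
      by (rule mono_as_prod) (use assms in auto)
    then show ?thesis unfolding xmono_def by simp
  qed
  also have "\<dots> = (\<Prod>j\<in>{2..n}. Xv j ^ nat (Poly_Mapping.lookup m j) * (Xv j ^ a j * xprime n F j ^ b j))"
    by (rule prod.distrib[symmetric])
  also have "\<dots> = xmono n F (\<lambda>j. a j + nat (Poly_Mapping.lookup m j)) b"
    unfolding xmono_def by (rule prod.cong[OF refl]) (simp add: power_add mult_ac)
  finally show ?thesis .
qed

lemma xmono_Q: "xmono n F a b \<in> Q"
proof (induction "\<Sum>i\<in>{2..n}. b i" arbitrary: a b rule: less_induct)
  case less
  show ?case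
  proof (cases "\<forall>i\<in>{2..n}. a i = 0 \<or> b i = 0")
    case True
    then have "xmono n F a b \<in> alg_st n F" unfolding alg_st_def by (intro rspan_gen) blast
    then show ?thesis by (rule Q_st)
  next
    case False
    then obtain i where i: "i \<in> {2..n}" "a i > 0" "b i > 0" by auto
    define a' where "a' = a(i := a i - 1)"
    define b' where "b' = b(i := b i - 1)"
    have split: "xmono n F a b = F i * xmono n F a' b'"
      unfolding a'_def b'_def by (rule xmono_split[of i a b]) (use i in auto)
    have i1: "i \<in> {1..n}" using i by simp
    have "phi (xmono n F a b) = G i * phi (xmono n F a' b')"
      unfolding split G_def using F_nn1[OF i1] nn1_xmono by (simp add: phi_mult)
    also have "\<dots> = phi (G i * xmono n F a' b')"
      using nn1_G[of i] nn1_xmono by (simp add: phi_mult G_def phi_phi)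
    finally have pe: "phi (xmono n F a b) = phi (G i * xmono n F a' b')" .
    have "G i * xmono n F a' b' =
       (\<Sum>m\<in>Poly_Mapping.keys (G i). lconst (Poly_Mapping.lookup (G i) m) * (Poly_Mapping.single m 1 * xmono n F a' b'))"
      by (subst poly_expand[of "G i"]) (simp add: sum_distrib_right mult.assoc)
    also have "\<dots> = (\<Sum>m\<in>Poly_Mapping.keys (G i). lconst (Poly_Mapping.lookup (G i) m) *
          xmono n F (\<lambda>j. a' j + nat (Poly_Mapping.lookup m j)) b')"
    proof (rule sum.cong[OF refl])
      fix m assume m: "m \<in> Poly_Mapping.keys (G i)"
      have "Poly_Mapping.single m 1 * xmono n F a' b' = xmono n F (\<lambda>j. a' j + nat (Poly_Mapping.lookup m j)) b'"
        by (rule single_xmono) (use G_keys[OF i(1) m] in blast)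
      then show "lconst (Poly_Mapping.lookup (G i) m) * (Poly_Mapping.single m 1 * xmono n F a' b') =
          lconst (Poly_Mapping.lookup (G i) m) * xmono n F (\<lambda>j. a' j + nat (Poly_Mapping.lookup m j)) b'" by simp
    qed
    finally have ge: "G i * xmono n F a' b' = \<dots>" .
    have sb: "(\<Sum>i\<in>{2..n}. b' i) < (\<Sum>i\<in>{2..n}. b i)"
    proof -
      have "(\<Sum>j\<in>{2..n}. b j) = b i + (\<Sum>j\<in>{2..n} - {i}. b j)" using i(1) by (simp add: sum.remove)
      moreover have "(\<Sum>j\<in>{2..n}. b' j) = b' i + (\<Sum>j\<in>{2..n} - {i}. b' j)" using i(1) by (simp add: sum.remove)
      moreover have "(\<Sum>j\<in>{2..n} - {i}. b' j) = (\<Sum>j\<in>{2..n} - {i}. b j)"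
        by (rule sum.cong) (auto simp: b'_def)
      moreover have "b' i < b i" using i by (simp add: b'_def)
      ultimately show ?thesis by simp
    qed
    have "G i * xmono n F a' b' \<in> Q"
      unfolding ge by (intro Q_sum Q_lconst less.hyps[OF sb]) simp
    then show ?thesis using pe by (rule Q_phi)
  qed
qed

lemma A_Q: "p \<in> alg_A n F \<Longrightarrow> p \<in> Q"
  unfolding alg_A_def
proof (induction p rule: rspan.induct)
  case zero then show ?case by (rule Q_zero)
next
  case (add s p r) then show ?case using xmono_Q by (auto intro: Q_add Q_lconst)
qed

lemma main_result:
  "{k + s | k s. k \<in> {p \<in> alg_A n F. phi p = 0} \<and> s \<in> alg_st n F} = alg_A n F
   \<and> {p \<in> alg_A n F. phi p = 0} \<inter> alg_st n F = {0}
   \<and> inj_on phi (alg_st n F)"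
proof (intro conjI)
  show "{k + s | k s. k \<in> {p \<in> alg_A n F. phi p = 0} \<and> s \<in> alg_st n F} = alg_A n F"
  proof
    show "{k + s | k s. k \<in> {p \<in> alg_A n F. phi p = 0} \<and> s \<in> alg_st n F} \<subseteq> alg_A n F"
      using st_sub_A unfolding alg_A_def by (auto intro: rspan_add)
  next
    show "alg_A n F \<subseteq> {k + s | k s. k \<in> {p \<in> alg_A n F. phi p = 0} \<and> s \<in> alg_st n F}"
    proof
      fix p assume p: "p \<in> alg_A n F"
      then obtain s where s: "s \<in> alg_st n F" "phi p = phi s" using A_Q unfolding Q_def by blast
      have "p - s \<in> alg_A n F" using p st_sub_A[OF s(1)] unfolding alg_A_def by (rule rspan_diff)
      moreover have "phi (p - s) = 0" using s(2) by (simp add: phi_diff)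
      moreover have "p = (p - s) + s" by simp
      ultimately show "p \<in> {k + s | k s. k \<in> {p \<in> alg_A n F. phi p = 0} \<and> s \<in> alg_st n F}"
        using s(1) by blast
    qed
  qed
next
  have z: "0 \<in> alg_st n F" unfolding alg_st_def by (rule rspan.zero)
  show "{p \<in> alg_A n F. phi p = 0} \<inter> alg_st n F = {0}"
    using inj0 z st_sub_A by (auto simp: phi_zero)
next
  show "inj_on phi (alg_st n F)"
  proof (rule inj_onI)
    fix x y assume x: "x \<in> alg_st n F" and y: "y \<in> alg_st n F" and e: "phi x = phi y"
    have "x - y \<in> alg_st n F" using x y unfolding alg_st_def by (rule rspan_diff)
    moreover have "phi (x - y) = 0" using e by (simp add: phi_diff)
    ultimately have "x - y = 0" by (rule inj0)
    then show "x = y" by simp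
  qed
qed

end


theorem lemma4p17:
  fixes n :: nat and F :: "nat \<Rightarrow> ('a::{factorial_ring_gcd, ring_char_0}) lpoly"
  assumes "n \<ge> 2"
    and "LP_seed n F"
    and "condition_1_2 n F"
  shows "{k + s | k s. k \<in> {p \<in> alg_A n F. phi p = 0} \<and> s \<in> alg_st n F} = alg_A n F
         \<and> {p \<in> alg_A n F. phi p = 0} \<inter> alg_st n F = {0}
         \<and> inj_on phi (alg_st n F)"
  by (rule main_result[OF assms])

end
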